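(* Let $d\ge 3$, $n\ge 2$, and let $F$ be an $n$-lattice framework in $\mathbb{R}^d$. Suppose that for every $1\le i\le d$ and every $0\le c\le n-1$, the subframework $F_{i,c}$ has a bar between every pair of its joints. Then $F$ is infinitesimally rigid.
   Context: A framework in $\mathbb{R}^d$ is a finite graph whose vertices (joints) are distinct points of $\mathbb{R}^d$ and whose edges (bars) are segments between pairs of joints. An infinitesimal motion of $\mathbb{R}^d$ is a map $f:\mathbb{R}^d\to\mathbb{R}^d$ with $(f(x)-f(y))\cdot(x-y)=0$ for all $x,y$. For a framework $F$ with joint set $X$, an infinitesimal motion of $F$ is a map $g:X\to\mathbb{R}^d$ with $(g(x)-g(y))\cdot(x-y)=0$ for every bar $xy$; $F$ is infinitesimally rigid if every infinitesimal motion of $F$ is the restriction to $X$ of an infinitesimal motion of $\mathbb{R}^d$. An $n$-lattice framework in $\mathbb{R}^d$ is a framework whose joints are the points $(x_1,\ldots,x_d)$ with all $x_i\in\{0,1,\ldots,n-1\}$ (bars arbitrary). For such $F$, $F_{i,c}$ denotes the subframework induced by all joints whose $i$-th coordinate equals $c$ (all bars of $F$ between such joints). *)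

theory Defs
  imports "HOL-Analysis.Analysis"
begin

definition lattice_joints :: "nat \<Rightarrow> (real^'d) set" where
  "lattice_joints n = {x. \<forall>i. x $ i \<in> real ` {0..<n}}"

definition is_framework :: "(real^'d) set \<Rightarrow> (real^'d) set set \<Rightarrow> bool" where
  "is_framework X B \<longleftrightarrow> finite X \<and> (\<forall>b\<in>B. \<exists>x y. x \<in> X \<and> y \<in> X \<and> x \<noteq> y \<and> b = {x, y})"

definition lattice_framework :: "nat \<Rightarrow> (real^'d) set set \<Rightarrow> bool" where
  "lattice_framework n B \<longleftrightarrow> is_framework (lattice_joints n) B"

definition inf_motion_space :: "(real^'d \<Rightarrow> real^'d) \<Rightarrow> bool" where
  "inf_motion_space f \<longleftrightarrow> (\<forall>x y. (f x - f y) \<bullet> (x - y) = 0)"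

definition inf_motion_fw :: "(real^'d) set \<Rightarrow> (real^'d) set set \<Rightarrow> (real^'d \<Rightarrow> real^'d) \<Rightarrow> bool" where
  "inf_motion_fw X B g \<longleftrightarrow> (\<forall>x\<in>X. \<forall>y\<in>X. {x, y} \<in> B \<longrightarrow> (g x - g y) \<bullet> (x - y) = 0)"

definition inf_rigid :: "(real^'d) set \<Rightarrow> (real^'d) set set \<Rightarrow> bool" where
  "inf_rigid X B \<longleftrightarrow> (\<forall>g. inf_motion_fw X B g \<longrightarrow>
      (\<exists>f. inf_motion_space f \<and> (\<forall>x\<in>X. f x = g x)))"

definition slice_joints :: "nat \<Rightarrow> 'd \<Rightarrow> nat \<Rightarrow> (real^'d) set" where
  "slice_joints n i c = {x \<in> lattice_joints n. x $ i = real c}"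

end

theory Submission
  imports Defs
begin

lemma inner_supp2:
  fixes u v :: "real^'d"
  assumes "j \<noteq> k" "\<forall>m. m \<noteq> j \<and> m \<noteq> k \<longrightarrow> v$m = 0"
  shows "u \<bullet> v = u$j * v$j + u$k * v$k"
proof -
  have "u \<bullet> v = (\<Sum>m\<in>UNIV. u$m * v$m)" by (simp add: inner_vec_def)
  also have "\<dots> = (\<Sum>m\<in>{j,k}. u$m * v$m)"
    by (rule sum.mono_neutral_right) (use assms in auto)
  also have "\<dots> = u$j * v$j + u$k * v$k" using assms(1) by simp
  finally show ?thesis .
qed

lemma inner_supp1:
  fixes u v :: "real^'d"
  assumes "\<forall>m. m \<noteq> j \<longrightarrow> v$m = 0"
  shows "u \<bullet> v = u$j * v$j"
proof -
  have "u \<bullet> v = (\<Sum>m\<in>UNIV. u$m * v$m)" by (simp add: inner_vec_def)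
  also have "\<dots> = (\<Sum>m\<in>{j}. u$m * v$m)"
    by (rule sum.mono_neutral_right) (use assms in auto)
  finally show ?thesis by simp
qed

lemma other_index:
  assumes "CARD('d) \<ge> 3"
  shows "\<exists>i::'d. i \<noteq> j \<and> i \<noteq> k"
proof (rule ccontr)
  assume "\<not> ?thesis"
  then have "(UNIV::'d set) \<subseteq> {j,k}" by auto
  then have "CARD('d) \<le> card {j,k}" by (simp add: card_mono)
  also have "\<dots> \<le> 2" by (simp add: card_insert_le_m1)
  finally show False using assms by simp
qed

theorem theorem6:
  fixes n :: nat and B :: "(real^'d) set set"
  assumes "CARD('d) \<ge> 3"
    and "n \<ge> 2"
    and "lattice_framework n B"
    and "\<forall>i c. c < n \<longrightarrow> (\<forall>x\<in>slice_joints n i c. \<forall>y\<in>slice_joints n i c.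
            x \<noteq> y \<longrightarrow> {x, y} \<in> B)"
  shows "inf_rigid (lattice_joints n) B"
  unfolding inf_rigid_def
proof (intro allI impI)
  fix g :: "real^'d \<Rightarrow> real^'d"
  assume gm: "inf_motion_fw (lattice_joints n) B g"
  define X :: "(real^'d) set" where "X = lattice_joints n"
  have memX: "x \<in> X \<longleftrightarrow> (\<forall>i. x$i \<in> real ` {0..<n})" for x
    by (simp add: X_def lattice_joints_def)
  have r0: "(0::real) \<in> real ` {0..<n}" using assms(2) by (intro image_eqI[of _ _ 0]) auto
  have r1: "(1::real) \<in> real ` {0..<n}" using assms(2)
    by (intro image_eqI[of _ _ 1]) auto
  have gc: "(g x - g y) \<bullet> (x - y) = 0" if "x \<in> X" "y \<in> X" "x$i = y$i" for x y :: "real^'d" and i :: 'd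
  proof (cases "x = y")
    case False
    from that(1) obtain c where c: "c < n" "x$i = real c" unfolding memX by force
    have "x \<in> slice_joints n i c" "y \<in> slice_joints n i c"
      using that c by (auto simp: slice_joints_def X_def)
    then have "{x,y} \<in> B" using assms(4) c False by blast
    then show ?thesis using gm that unfolding inf_motion_fw_def X_def by blast
  qed simp
  have oth: "\<exists>i::'d. i \<noteq> j \<and> i \<noteq> k" for j k :: 'd using other_index[OF assms(1)] .
  have X0: "0 \<in> X" using r0 by (simp add: memX)
  have Xe: "axis l 1 \<in> X" for l using r0 r1 by (simp add: memX axis_def)
  define u where "u l = g (axis l 1) - g 0" for l
  have skew: "u l $ m = - u m $ l" for l m
  proof (cases "l = m")
    case True
    obtain k where k: "k \<noteq> l" using oth by blast
    have "(g (axis l 1) - g 0) \<bullet> (axis l 1 - 0) = 0"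
      by (rule gc[OF Xe[of l] X0, where i=k]) (simp add: axis_def k)
    then have "u l $ l = 0" by (simp add: u_def inner_axis)
    then show ?thesis using True by simp
  next
    case False
    obtain k where k: "k \<noteq> l" "k \<noteq> m" using oth by blast
    have "(g (axis l 1) - g (axis m 1)) \<bullet> (axis l 1 - axis m 1) = 0"
      by (rule gc[OF Xe[of l] Xe[of m], where i=k]) (simp add: axis_def k)
    moreover have "g (axis l 1) - g (axis m 1) = u l - u m" by (simp add: u_def)
    moreover have "u l $ l = 0" "u m $ m = 0"
    proof -
      have "(g (axis l 1) - g 0) \<bullet> (axis l 1 - 0) = 0"
        by (rule gc[OF Xe[of l] X0, where i=k]) (simp add: axis_def k)
      then show "u l $ l = 0" by (simp add: u_def inner_axis)
      have "(g (axis m 1) - g 0) \<bullet> (axis m 1 - 0) = 0"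
        by (rule gc[OF Xe[of m] X0, where i=k]) (simp add: axis_def k)
      then show "u m $ m = 0" by (simp add: u_def inner_axis)
    qed
    ultimately show ?thesis by (simp add: inner_diff_right inner_axis)
  qed
  define f where "f x = g 0 + (\<Sum>l\<in>UNIV. (x$l) *\<^sub>R u l)" for x
  have fdiff: "f x - f y = (\<Sum>l\<in>UNIV. ((x - y)$l) *\<^sub>R u l)" for x y
    by (simp add: f_def scaleR_diff_left sum_subtractf)
  have fmot: "inf_motion_space f"
    unfolding inf_motion_space_def
  proof (intro allI)
    fix x y :: "real^'d"
    define w where "w = x - y"
    define S where "S = (\<Sum>l\<in>UNIV. \<Sum>m\<in>UNIV. w$l * (u l $ m * w$m))"
    have "(f x - f y) \<bullet> (x - y) = (\<Sum>i\<in>UNIV. (\<Sum>l\<in>UNIV. w $ l * u l $ i) * w $ i)"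
      by (simp add: fdiff w_def[symmetric] inner_sum_left inner_vec_def)
    also have "\<dots> = (\<Sum>i\<in>UNIV. \<Sum>l\<in>UNIV. w $ l * (u l $ i * w $ i))"
      by (simp add: sum_distrib_right mult.assoc)
    also have "\<dots> = S"
      unfolding S_def by (rule sum.swap)
    moreover have "S = - S"
    proof -
      have "S = (\<Sum>l\<in>UNIV. \<Sum>m\<in>UNIV. - (w$m * (u m $ l * w$l)))"
        unfolding S_def by (rule sum.cong[OF refl], rule sum.cong[OF refl]) (subst skew, simp add: algebra_simps)
      also have "\<dots> = - (\<Sum>m\<in>UNIV. \<Sum>l\<in>UNIV. w$m * (u m $ l * w$l))"
        by (subst sum.swap) (simp add: sum_negf)
      also have "\<dots> = - S" by (simp add: S_def)
      finally show ?thesis .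
    qed
    ultimately show "(f x - f y) \<bullet> (x - y) = 0" by simp
  qed
  define h where "h x = g x - f x" for x
  have hc: "(h x - h y) \<bullet> (x - y) = 0" if "x \<in> X" "y \<in> X" "x$i = y$i" for x y :: "real^'d" and i :: 'd
  proof -
    have "h x - h y = (g x - g y) - (f x - f y)" by (simp add: h_def)
    moreover have "(f x - f y) \<bullet> (x - y) = 0" using fmot by (simp add: inf_motion_space_def)
    ultimately show ?thesis using gc[OF that] by (simp only: inner_diff_left)
  qed
  have h0: "h 0 = 0" by (simp add: h_def f_def)
  have he: "h (axis l 1) = 0" for l
  proof -
    have "(\<Sum>m\<in>UNIV. (axis l (1::real) $ m) *\<^sub>R u m) = u l"
    proof -
      have "\<And>m. (axis l (1::real) $ m) *\<^sub>R u m = (if m = l then u l else 0)"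
        by (simp add: axis_def)
      then have "(\<Sum>m\<in>UNIV. (axis l (1::real) $ m) *\<^sub>R u m) = (\<Sum>m\<in>UNIV. if m = l then u l else 0)"
        by (simp only:)
      then show ?thesis by simp
    qed
    then show ?thesis by (simp add: h_def f_def u_def)
  qed
  have stepA: "h x $ m = 0" if "x \<in> X" "x$k = 0" "m \<noteq> k" for x k m
  proof -
    have a: "h x \<bullet> (x - 0) = 0" using hc[OF that(1) X0, where i=k] that h0 by simp
    have b: "h x \<bullet> (x - axis m 1) = 0" using hc[OF that(1) Xe[of m], where i=k] that he
      by (simp add: axis_def)
    have "h x \<bullet> axis m 1 = h x \<bullet> (x - 0) - h x \<bullet> (x - axis m 1)"
      by (simp add: inner_diff_right)
    then show ?thesis using a b by (simp add: inner_axis)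
  qed
  have stepB: "h x = 0" if xX: "x \<in> X" and xk: "x$k = 0" for x k
  proof -
    obtain i where i: "i \<noteq> k" using oth by blast
    obtain j where j: "j \<noteq> i" "j \<noteq> k" using oth by blast
    define y where "y = (\<chi> m. if m = j then 0 else if m = k then 1 else x$m)"
    define z where "z = (\<chi> m. if m = i then 0 else if m = k then 1 else x$m)"
    have yX: "y \<in> X" using xX r0 r1 by (auto simp: memX y_def)
    have zX: "z \<in> X" using xX r0 r1 by (auto simp: memX z_def)
    have hx: "h x $ m = 0" if "m \<noteq> k" for m using stepA[OF xX xk that] .
    have hy: "h y $ m = 0" if "m \<noteq> j" for m using stepA[OF yX _ that] by (simp add: y_def)
    have hz: "h z $ m = 0" if "m \<noteq> i" for m using stepA[OF zX _ that] by (simp add: z_def)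
    have e1: "(h x - h y) \<bullet> (x - y) = 0" using hc[OF xX yX, where i=i] i j by (simp add: y_def)
    have e2: "(h x - h z) \<bullet> (x - z) = 0" using hc[OF xX zX, where i=j] i j by (simp add: z_def)
    have e3: "(h y - h z) \<bullet> (y - z) = 0" using hc[OF yX zX, where i=k] i j by (simp add: y_def z_def)
    have e1': "(h x - h y) \<bullet> (x - y) = (h x - h y)$j * (x - y)$j + (h x - h y)$k * (x - y)$k"
      by (rule inner_supp2) (use j in \<open>auto simp: y_def\<close>)
    have e2': "(h x - h z) \<bullet> (x - z) = (h x - h z)$i * (x - z)$i + (h x - h z)$k * (x - z)$k"
      by (rule inner_supp2) (use i in \<open>auto simp: z_def\<close>)
    have e3': "(h y - h z) \<bullet> (y - z) = (h y - h z)$i * (y - z)$i + (h y - h z)$j * (y - z)$j"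
      by (rule inner_supp2) (use i j in \<open>auto simp: y_def z_def\<close>)
    have E1: "- (h y $ j * x$j) - h x $ k = 0"
      using e1 e1' hx[OF j(2)] hy[OF j(2)[symmetric]] j xk by (simp add: y_def)
    have E2: "- (h z $ i * x$i) - h x $ k = 0"
      using e2 e2' hx[OF i] hz[OF i[symmetric]] i j xk by (simp add: z_def)
    have E3: "- (h z $ i * x$i) - (h y $ j * x$j) = 0"
      using e3 e3' hy[OF j(1)[symmetric]] hz[OF j(1)] i j xk by (simp add: y_def z_def algebra_simps)
    have "h x $ k = 0" using E1 E2 E3 by linarith
    then show ?thesis using hx by (simp add: vec_eq_iff) (metis)
  qed
  have stepC: "h x = 0" if xX: "x \<in> X" for x
  proof -
    have "h x $ k = 0" for k
    proof -
      obtain l where l: "l \<noteq> k" using oth by blast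
      obtain i where i: "i \<noteq> k" "i \<noteq> l" using oth by blast
      define p where "p = (\<chi> m. if m = k then 0 else if m = l then 0 else x$m)"
      define q where "q = (\<chi> m. if m = k then 1 else if m = l then 0 else x$m)"
      have pX: "p \<in> X" using xX r0 r1 by (auto simp: memX p_def)
      have qX: "q \<in> X" using xX r0 r1 by (auto simp: memX q_def)
      have hp: "h p = 0" using stepB[OF pX, of l] l by (simp add: p_def)
      have hq: "h q = 0" using stepB[OF qX, of l] l by (simp add: q_def)
      have a: "h x \<bullet> (x - p) = 0" using hc[OF xX pX, where i=i] i hp by (simp add: p_def)
      have b: "h x \<bullet> (x - q) = 0" using hc[OF xX qX, where i=i] i hq by (simp add: q_def)
      have "h x \<bullet> (q - p) = h x \<bullet> (x - p) - h x \<bullet> (x - q)" by (simp add: inner_diff_right)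
      moreover have "h x \<bullet> (q - p) = h x $ k * (q - p) $ k"
        by (rule inner_supp1) (simp add: p_def q_def)
      ultimately show ?thesis using a b by (simp add: p_def q_def)
    qed
    then show ?thesis by (simp add: vec_eq_iff)
  qed
  show "\<exists>f. inf_motion_space f \<and> (\<forall>x\<in>lattice_joints n. f x = g x)"
    using fmot stepC by (auto simp: h_def X_def)
qed

end
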